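(* Let $h,p,K>0$ and define $H(x)=h\max(x,0)+p\max(-x,0)$ and $\delta(u)=1$ if $u>0$, $\delta(u)=0$ if $u=0$. Fix an initial inventory level $x_0\in\mathbb{R}$, a horizon $N\ge1$ and a demand sample path $\omega=(d_1,\dots,d_N)$ of nonnegative demands. For order quantities $u_1\ge 0$ define \[J_N(u_1,\omega)=H(x_1)+K\delta(u_1)+\min_{u_2,\dots,u_N\ge 0}\sum_{i=2}^N\big(H(x_i)+K\delta(u_i)\big),\] where $x_i=x_{i-1}-d_i+u_i$ for $i=1,\dots,N$. Then $J_N(u_1,\omega)$ is $K$-convex in $u_1$ on $u_1>0$, i.e. for all $0<u_1<u_1'<u_1''$, \[K+J_N(u_1'',\omega)\ge J_N(u_1',\omega)+\frac{u_1''-u_1'}{u_1'-u_1}\big(J_N(u_1',\omega)-J_N(u_1,\omega)\big).\]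
   Context: This is a periodic-review inventory model with fixed setup cost $K$ per order, holding cost rate $h$, backlog penalty rate $p$, full backlogging; $x_i$ is the inventory level at the end of period $i$, $u_i$ the order quantity placed at the beginning of period $i$, $d_i$ the demand in period $i$. *)

theory Defs
  imports Complex_Main
begin

definition Hcost :: "real \<Rightarrow> real \<Rightarrow> real \<Rightarrow> real" where
  "Hcost h p x = h * max x 0 + p * max (- x) 0"

definition delta :: "real \<Rightarrow> real" where
  "delta u = (if u > 0 then 1 else 0)"

primrec traj :: "real \<Rightarrow> (nat \<Rightarrow> real) \<Rightarrow> (nat \<Rightarrow> real) \<Rightarrow> nat \<Rightarrow> real" where
  "traj x0 d u 0 = x0"
| "traj x0 d u (Suc i) = traj x0 d u i - d (Suc i) + u (Suc i)"

definition JN :: "real \<Rightarrow> real \<Rightarrow> real \<Rightarrow> nat \<Rightarrow> real \<Rightarrow> (nat \<Rightarrow> real) \<Rightarrow> real \<Rightarrow> real" where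
  "JN h p K N x0 d u1 =
     Hcost h p (traj x0 d ((\<lambda>_. 0)(1 := u1)) 1) + K * delta u1
     + (INF u \<in> {u :: nat \<Rightarrow> real. \<forall>i. 0 \<le> u i}.
          \<Sum>i = 2..N. Hcost h p (traj x0 d (u(1 := u1)) i) + K * delta (u i))"

end

theory Submission
  imports Defs
begin

definition kconv :: "real \<Rightarrow> (real \<Rightarrow> real) \<Rightarrow> bool" where
  "kconv K G = (\<forall>a b c. a < b \<longrightarrow> b < c \<longrightarrow>
      G b \<le> (c-b)/(c-a) * G a + (1 - (c-b)/(c-a)) * (K + G c))"

definition cost :: "real \<Rightarrow> real \<Rightarrow> real \<Rightarrow> nat \<Rightarrow> (nat \<Rightarrow> real) \<Rightarrow> real \<Rightarrow> (nat \<Rightarrow> real) \<Rightarrow> real" where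
  "cost h p K n d y u = (\<Sum>i=1..n. Hcost h p (traj y d u i) + K * delta (u i))"

definition F :: "real \<Rightarrow> real \<Rightarrow> real \<Rightarrow> nat \<Rightarrow> (nat \<Rightarrow> real) \<Rightarrow> real \<Rightarrow> real" where
  "F h p K n d y = (INF u \<in> {u. \<forall>i. 0 \<le> u i}. cost h p K n d y u)"

lemma Hcost_nonneg: "0 \<le> h \<Longrightarrow> 0 \<le> p \<Longrightarrow> 0 \<le> Hcost h p x"
  by (simp add: Hcost_def)

lemma delta_nonneg: "0 \<le> delta u" by (simp add: delta_def)

lemma cost_nonneg: "0 \<le> h \<Longrightarrow> 0 \<le> p \<Longrightarrow> 0 \<le> K \<Longrightarrow> 0 \<le> cost h p K n d y u"
  unfolding cost_def by (intro sum_nonneg add_nonneg_nonneg Hcost_nonneg mult_nonneg_nonneg delta_nonneg)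

lemma bdd0: "(\<And>x. x \<in> A \<Longrightarrow> (0::real) \<le> f x) \<Longrightarrow> bdd_below (f ` A)"
  by (rule bdd_belowI[where m=0]) auto

lemma nonempty_nn: "{u::nat\<Rightarrow>real. \<forall>i. 0 \<le> u i} \<noteq> {}"
proof -
  have "(\<lambda>_. 0) \<in> {u::nat\<Rightarrow>real. \<forall>i. 0 \<le> u i}" by simp
  then show ?thesis by blast
qed

lemma F_nonneg: "0 \<le> h \<Longrightarrow> 0 \<le> p \<Longrightarrow> 0 \<le> K \<Longrightarrow> 0 \<le> F h p K n d y"
  unfolding F_def by (rule cINF_greatest) (auto intro: cost_nonneg simp: nonempty_nn)

lemma traj_shift: "traj y d u (Suc i) = traj (y - d 1 + u 1) (\<lambda>j. d (Suc j)) (\<lambda>j. u (Suc j)) i"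
  by (induction i) auto

lemma traj_cong: "(\<And>i. 1 \<le> i \<Longrightarrow> u i = u' i) \<Longrightarrow> traj y d u i = traj y d u' i"
  by (induction i) auto

lemma cost_cong: "(\<And>i. 1 \<le> i \<Longrightarrow> u i = u' i) \<Longrightarrow> cost h p K n d y u = cost h p K n d y u'"
  unfolding cost_def
  by (intro sum.cong refl) (auto simp: traj_cong[of u u'])

lemma cost_Suc: "cost h p K (Suc n) d y u = Hcost h p (y - d 1 + u 1) + K * delta (u 1)
   + cost h p K n (\<lambda>j. d (Suc j)) (y - d 1 + u 1) (\<lambda>j. u (Suc j))"
proof -
  have "cost h p K (Suc n) d y u = (Hcost h p (traj y d u 1) + K * delta (u 1))
     + (\<Sum>i=Suc 1..Suc n. Hcost h p (traj y d u i) + K * delta (u i))"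
    unfolding cost_def by (subst sum.atLeast_Suc_atMost) auto
  also have "(\<Sum>i=Suc 1..Suc n. Hcost h p (traj y d u i) + K * delta (u i))
     = (\<Sum>i=1..n. Hcost h p (traj y d u (Suc i)) + K * delta (u (Suc i)))"
    by (rule sum.shift_bounds_cl_Suc_ivl)
  finally show ?thesis unfolding cost_def traj_shift[of y d u] by simp
qed

lemma F_Suc:
  assumes h: "0 \<le> h" and p: "0 \<le> p" and K: "0 \<le> K"
  shows "F h p K (Suc n) d y = (INF v\<in>{v::real. 0\<le>v}. Hcost h p (y - d 1 + v) + K*delta v
            + F h p K n (\<lambda>j. d (Suc j)) (y - d 1 + v))"
proof (rule antisym)
  show "F h p K (Suc n) d y \<le> (INF v\<in>{v::real. 0\<le>v}. Hcost h p (y - d 1 + v) + K*delta v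
            + F h p K n (\<lambda>j. d (Suc j)) (y - d 1 + v))"
  proof (rule cINF_greatest)
    show "{v::real. 0\<le>v} \<noteq> {}" by auto
    fix v :: real assume v: "v \<in> {v. 0 \<le> v}"
    have "F h p K (Suc n) d y - (Hcost h p (y - d 1 + v) + K*delta v)
          \<le> F h p K n (\<lambda>j. d (Suc j)) (y - d 1 + v)"
      unfolding F_def[of h p K n]
    proof (rule cINF_greatest)
      show "{u::nat\<Rightarrow>real. \<forall>i. 0 \<le> u i} \<noteq> {}" using nonempty_nn .
      fix u' :: "nat \<Rightarrow> real" assume u': "u' \<in> {u. \<forall>i. 0 \<le> u i}"
      define u where "u = (\<lambda>i::nat. if i = 1 then v else u' (i - 1))"
      have un: "u \<in> {u. \<forall>i. 0 \<le> u i}" using u' v by (auto simp: u_def)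
      have "F h p K (Suc n) d y \<le> cost h p K (Suc n) d y u"
        unfolding F_def by (rule cINF_lower[OF bdd0 un]) (auto intro: cost_nonneg h p K)
      also have "\<dots> = Hcost h p (y - d 1 + v) + K*delta v
          + cost h p K n (\<lambda>j. d (Suc j)) (y - d 1 + v) u'"
        unfolding cost_Suc by (simp add: u_def, rule cost_cong, auto)
      finally show "F h p K (Suc n) d y - (Hcost h p (y - d 1 + v) + K*delta v)
          \<le> cost h p K n (\<lambda>j. d (Suc j)) (y - d 1 + v) u'" by simp
    qed
    then show "F h p K (Suc n) d y \<le> Hcost h p (y - d 1 + v) + K*delta v
            + F h p K n (\<lambda>j. d (Suc j)) (y - d 1 + v)" by simp
  qed
next
  show "(INF v\<in>{v::real. 0\<le>v}. Hcost h p (y - d 1 + v) + K*delta v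
            + F h p K n (\<lambda>j. d (Suc j)) (y - d 1 + v)) \<le> F h p K (Suc n) d y"
    unfolding F_def[of h p K "Suc n"]
  proof (rule cINF_greatest)
    show "{u::nat\<Rightarrow>real. \<forall>i. 0 \<le> u i} \<noteq> {}" using nonempty_nn .
    fix u :: "nat \<Rightarrow> real" assume u: "u \<in> {u. \<forall>i. 0 \<le> u i}"
    have "(INF v\<in>{v::real. 0\<le>v}. Hcost h p (y - d 1 + v) + K*delta v
            + F h p K n (\<lambda>j. d (Suc j)) (y - d 1 + v))
       \<le> Hcost h p (y - d 1 + u 1) + K*delta (u 1) + F h p K n (\<lambda>j. d (Suc j)) (y - d 1 + u 1)"
      using u by (intro cINF_lower bdd0)
        (auto intro!: add_nonneg_nonneg Hcost_nonneg F_nonneg mult_nonneg_nonneg delta_nonneg h p K)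
    also have "F h p K n (\<lambda>j. d (Suc j)) (y - d 1 + u 1)
        \<le> cost h p K n (\<lambda>j. d (Suc j)) (y - d 1 + u 1) (\<lambda>j. u (Suc j))"
      unfolding F_def using u by (intro cINF_lower bdd0) (auto intro: cost_nonneg h p K)
    finally show "(INF v\<in>{v::real. 0\<le>v}. Hcost h p (y - d 1 + v) + K*delta v
            + F h p K n (\<lambda>j. d (Suc j)) (y - d 1 + v)) \<le> cost h p K (Suc n) d y u"
      unfolding cost_Suc by simp
  qed
qed


lemma mu_ge:
  fixes a W b c Z :: real
  assumes "a \<le> W" "W < b" "b < c" "c \<le> Z"
  shows "(c-b)/(c-a) \<le> (Z-b)/(Z-W)"
proof -
  have "(c-b)*(Z-W) \<le> (c-b)*(Z-a)" using assms by (intro mult_left_mono) auto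
  also have "(c-b)*(Z-a) \<le> (Z-b)*(c-a)"
  proof -
    have "(Z-b)*(c-a) - (c-b)*(Z-a) = (Z-c)*(b-a)" by (simp add: algebra_simps)
    moreover have "0 \<le> (Z-c)*(b-a)" using assms by auto
    ultimately show ?thesis by linarith
  qed
  finally show ?thesis using assms by (simp add: divide_simps)
qed

lemma mix_le:
  fixes l m x y :: real
  assumes "l \<le> m" "x \<le> y"
  shows "m*x + (1-m)*y \<le> l*x + (1-l)*y"
proof -
  have "(m-l)*(x-y) \<le> 0" using assms by (intro mult_nonneg_nonpos) auto
  then show ?thesis by (simp add: algebra_simps)
qed

lemma lam_bounds:
  fixes a b c :: real
  assumes "a < b" "b < c"
  shows "0 < (c-b)/(c-a)" "(c-b)/(c-a) < 1"
  using assms by (auto simp: divide_simps)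

lemma scarf:
  fixes G :: "real \<Rightarrow> real" and K :: real
  assumes K: "0 \<le> K" and G0: "\<And>x. 0 \<le> G x" and kc: "kconv K G"
  shows "kconv K (\<lambda>y. INF v\<in>{v::real. 0\<le>v}. K*delta v + G (y+v))"
  unfolding kconv_def
proof (intro allI impI)
  fix a b c :: real assume ab: "a < b" and bc: "b < c"
  define f where "f = (\<lambda>y. INF v\<in>{v::real. 0\<le>v}. K*delta v + G (y+v))"
  define l where "l = (c-b)/(c-a)"
  have l0: "0 < l" and l1: "l < 1" using lam_bounds[OF ab bc] by (auto simp: l_def)
  have fle: "f y \<le> K*delta v + G (y+v)" if "0 \<le> v" for y v
    unfolding f_def using that
    by (intro cINF_lower bdd0) (auto intro!: add_nonneg_nonneg mult_nonneg_nonneg K delta_nonneg G0)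
  have fb0: "f b \<le> G b" using fle[of 0 b] by (simp add: delta_def)
  have fbt: "f b \<le> K + G t" if "b < t" for t
    using fle[of "t-b" b] that by (simp add: delta_def)
  have kcv: "G y \<le> (z-y)/(z-x) * G x + (1 - (z-y)/(z-x)) * (K + G z)" if "x < y" "y < z" for x y z
    using kc that unfolding kconv_def by blast
  have star: "f b \<le> l*(K*delta w + G (a+w)) + (1-l)*(K + (K*delta z + G (c+z)))"
    if w: "0 \<le> w" and z: "0 \<le> z" for w z
  proof -
    have dz: "0 \<le> K*delta z" using K delta_nonneg by simp
    show ?thesis
    proof (cases "w = 0")
      case True
      show ?thesis
      proof (cases "z = 0")
        case True
        with \<open>w=0\<close> show ?thesis using fb0 kcv[OF ab bc] by (simp add: delta_def l_def)
      next
        case False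
        then have zp: "0 < z" using z by simp
        define m where "m = (c+z-b)/(c+z-a)"
        have lm: "l \<le> m" unfolding l_def m_def by (rule mu_ge) (use ab bc zp in auto)
        have m1: "m \<le> 1" using ab bc zp by (auto simp: m_def divide_simps)
        have dz1: "delta z = 1" using zp by (simp add: delta_def)
        have gb: "G b \<le> m * G a + (1-m)*(K + G (c+z))"
          using kcv[of a b "c+z"] ab bc zp by (simp add: m_def)
        show ?thesis
        proof (cases "G a \<le> K + G (c+z)")
          case True
          have "G b \<le> l * G a + (1-l)*(K + G (c+z))"
            using gb mix_le[OF lm True] by linarith
          moreover have "(1-l)*(K + G (c+z)) \<le> (1-l)*(K + (K + G (c+z)))"
            using l1 K by (intro mult_left_mono) auto
          ultimately show ?thesis using fb0 \<open>w=0\<close> dz1 by (simp add: delta_def)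
        next
          case False
          have "f b \<le> K + G (c+z)" using fbt[of "c+z"] bc zp by simp
          also have "\<dots> = l*(K + G (c+z)) + (1-l)*(K + G (c+z))" by (simp add: algebra_simps)
          also have "\<dots> \<le> l * G a + (1-l)*(K + (K + G (c+z)))"
            using False l0 l1 K
            by (intro add_mono mult_left_mono) auto
          finally show ?thesis using \<open>w=0\<close> dz1 by (simp add: delta_def)
        qed
      qed
    next
      case False
      then have wp: "0 < w" using w by simp
      have dw1: "delta w = 1" using wp by (simp add: delta_def)
      have fz: "f b \<le> K + G (c+z)" using fbt[of "c+z"] bc z by simp
      have rhs: "l*(K + G (a+w)) + (1-l)*(K + G (c+z)) \<le> l*(K*delta w + G (a+w)) + (1-l)*(K + (K*delta z + G (c+z)))"
        using dw1 dz l1 by (simp add: mult_left_mono)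
      have "f b \<le> l*(K + G (a+w)) + (1-l)*(K + G (c+z))"
      proof (cases "b \<le> a + w")
        case True
        have fw: "f b \<le> K + G (a+w)"
        proof (cases "b = a + w")
          case True then show ?thesis using fb0 K by simp
        next
          case False then show ?thesis using fbt[of "a+w"] \<open>b \<le> a+w\<close> by simp
        qed
        have "f b = l * f b + (1-l) * f b" by (simp add: algebra_simps)
        also have "\<dots> \<le> l*(K + G (a+w)) + (1-l)*(K + G (c+z))"
          using fw fz l0 l1 by (intro add_mono mult_left_mono) auto
        finally show ?thesis .
      next
        case False
        define m where "m = (c+z-b)/(c+z-(a+w))"
        have lm: "l \<le> m" unfolding l_def m_def by (rule mu_ge) (use ab bc z False wp in auto)
        have gb: "G b \<le> m * G (a+w) + (1-m)*(K + G (c+z))"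
          using kcv[of "a+w" b "c+z"] False bc z by (simp add: m_def)
        have m1: "m \<le> 1" using False bc z by (auto simp: m_def divide_simps)
        show ?thesis
        proof (cases "G (a+w) \<le> G (c+z)")
          case True
          have "(1-m)*K \<le> K" using m1 lm l0 K
            by (simp add: mult_left_le_one_le)
          then have "G b \<le> K + (m * G (a+w) + (1-m)*G (c+z))" using gb by (simp add: algebra_simps)
          also have "\<dots> \<le> K + (l * G (a+w) + (1-l)*G (c+z))" using mix_le[OF lm True] by simp
          finally show ?thesis using fb0 by (simp add: algebra_simps)
        next
          case False
          have "K + G (c+z) = l*(K + G (c+z)) + (1-l)*(K + G (c+z))" by (simp add: algebra_simps)
          also have "\<dots> \<le> l*(K + G (a+w)) + (1-l)*(K + G (c+z))"
            using False l0 l1 by (intro add_mono mult_left_mono) auto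
          finally show ?thesis using fz by linarith
        qed
      qed
      with rhs show ?thesis by linarith
    qed
  qed
  have fa_eq: "f a = (INF v\<in>{v::real. 0\<le>v}. K*delta v + G (a+v))" by (simp add: f_def)
  have fc_eq: "f c = (INF v\<in>{v::real. 0\<le>v}. K*delta v + G (c+v))" by (simp add: f_def)
  have "f b \<le> l * f a + (1-l) * (K + f c)"
  proof -
    have s1: "(f b - l * f a) / (1-l) - K \<le> K*delta z + G (c+z)" if z: "0 \<le> z" for z
    proof -
      have "(f b - (1-l)*(K + (K*delta z + G (c+z)))) / l \<le> f a"
        unfolding fa_eq
      proof (rule cINF_greatest)
        show "{v::real. 0\<le>v} \<noteq> {}" by auto
        fix w :: real assume "w \<in> {v. 0 \<le> v}"
        then have "f b \<le> l*(K*delta w + G (a+w)) + (1-l)*(K + (K*delta z + G (c+z)))"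
          using star z by auto
        then show "(f b - (1-l)*(K + (K*delta z + G (c+z)))) / l \<le> K*delta w + G (a+w)"
          using l0 by (simp add: divide_simps algebra_simps)
      qed
      then have "f b \<le> l * f a + (1-l)*(K + (K*delta z + G (c+z)))"
        using l0 by (simp add: divide_simps algebra_simps)
      then show ?thesis using l1 by (simp add: divide_simps algebra_simps)
    qed
    have "(f b - l * f a) / (1-l) - K \<le> f c"
      unfolding fc_eq
      by (rule cINF_greatest) (auto intro: s1)
    then show ?thesis using l1 by (simp add: divide_simps algebra_simps)
  qed
  then show "(INF v\<in>{v::real. 0\<le>v}. K*delta v + G (b+v)) \<le> (c-b)/(c-a) * (INF v\<in>{v::real. 0\<le>v}. K*delta v + G (a+v))
       + (1 - (c-b)/(c-a)) * (K + (INF v\<in>{v::real. 0\<le>v}. K*delta v + G (c+v)))"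
    by (simp add: f_def l_def)
qed


lemma max_conv:
  fixes l a c :: real
  assumes "0 \<le> l" "l \<le> 1"
  shows "max (l*a + (1-l)*c) 0 \<le> l * max a 0 + (1-l) * max c 0"
proof -
  have "l*a \<le> l * max a 0" using assms by (intro mult_left_mono) auto
  moreover have "(1-l)*c \<le> (1-l) * max c 0" using assms by (intro mult_left_mono) auto
  moreover have "0 \<le> l * max a 0 + (1-l) * max c 0" using assms by auto
  ultimately show ?thesis by linarith
qed

lemma Hcost_conv:
  fixes a b c h p l :: real
  assumes h: "0 \<le> h" and p: "0 \<le> p" and l: "0 \<le> l" "l \<le> 1" and b: "b = l*a + (1-l)*c"
  shows "Hcost h p b \<le> l * Hcost h p a + (1-l) * Hcost h p c"
proof -
  have m1: "max b 0 \<le> l * max a 0 + (1-l) * max c 0" using max_conv[OF l] b by simp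
  have "-b = l*(-a) + (1-l)*(-c)" using b by (simp add: algebra_simps)
  then have m2: "max (-b) 0 \<le> l * max (-a) 0 + (1-l) * max (-c) 0" using max_conv[OF l, of "-a" "-c"] by simp
  have "h * max b 0 \<le> h * (l * max a 0 + (1-l) * max c 0)" using m1 h by (rule mult_left_mono)
  moreover have "p * max (-b) 0 \<le> p * (l * max (-a) 0 + (1-l) * max (-c) 0)" using m2 p by (rule mult_left_mono)
  ultimately show ?thesis unfolding Hcost_def by (simp add: algebra_simps)
qed

lemma kconv_add_H:
  assumes h: "0 \<le> h" and p: "0 \<le> p" and kc: "kconv K G"
  shows "kconv K (\<lambda>y. Hcost h p y + G y)"
  unfolding kconv_def
proof (intro allI impI)
  fix a b c :: real assume ab: "a < b" and bc: "b < c"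
  define l where "l = (c-b)/(c-a)"
  have l0: "0 < l" and l1: "l < 1" using lam_bounds[OF ab bc] by (auto simp: l_def)
  have ca: "c - a \<noteq> 0" using ab bc by simp
  have l1e: "1 - l = (b-a)/(c-a)" unfolding l_def using ca by (simp add: field_simps)
  have e1: "l*a + (1-l)*c = ((c-b)*a + (b-a)*c)/(c-a)"
    unfolding l1e unfolding l_def by (simp add: add_divide_distrib)
  have "(c-b)*a + (b-a)*c = b*(c-a)" by (simp add: algebra_simps)
  then have "((c-b)*a + (b-a)*c)/(c-a) = b" using ca by simp
  with e1 have bl: "b = l*a + (1-l)*c" by simp
  have "Hcost h p b \<le> l * Hcost h p a + (1-l) * Hcost h p c"
    using Hcost_conv[OF h p _ _ bl] l0 l1 by auto
  moreover have "G b \<le> l * G a + (1-l)*(K + G c)" using kc ab bc unfolding kconv_def l_def by blast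
  ultimately show "Hcost h p b + G b \<le> (c-b)/(c-a) * (Hcost h p a + G a) + (1 - (c-b)/(c-a)) * (K + (Hcost h p c + G c))"
    unfolding l_def[symmetric] by (simp add: algebra_simps)
qed

lemma kconv_zero: "0 \<le> K \<Longrightarrow> kconv K (\<lambda>_. 0)"
  unfolding kconv_def using lam_bounds by (auto intro!: mult_nonneg_nonneg)

lemma kconv_shift:
  assumes "kconv K G" shows "kconv K (\<lambda>y. G (y + t))"
  unfolding kconv_def
proof (intro allI impI)
  fix a b c :: real assume "a < b" "b < c"
  then have "G (b+t) \<le> ((c+t)-(b+t))/((c+t)-(a+t)) * G (a+t) + (1 - ((c+t)-(b+t))/((c+t)-(a+t))) * (K + G (c+t))"
    using assms unfolding kconv_def by (meson add_strict_right_mono)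
  then show "G (b+t) \<le> (c-b)/(c-a) * G (a+t) + (1 - (c-b)/(c-a)) * (K + G (c+t))" by simp
qed

lemma F_zero: "F h p K 0 d y = 0"
  unfolding F_def cost_def using nonempty_nn by simp

lemma main_kconv:
  assumes h: "0 \<le> h" and p: "0 \<le> p" and K: "0 \<le> K"
  shows "kconv K (\<lambda>z. Hcost h p z + F h p K n d z)"
proof (induction n arbitrary: d)
  case 0
  show ?case unfolding F_zero using kconv_add_H[OF h p kconv_zero[OF K]] by simp
next
  case (Suc n)
  define G where "G = (\<lambda>z. Hcost h p z + F h p K n (\<lambda>j. d (Suc j)) z)"
  define g where "g = (\<lambda>y. INF v\<in>{v::real. 0\<le>v}. K*delta v + G (y+v))"
  have G0: "0 \<le> G x" for x unfolding G_def using Hcost_nonneg[OF h p] F_nonneg[OF h p K] by (simp add: add_nonneg_nonneg)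
  have kg: "kconv K g" unfolding g_def by (rule scarf[OF K G0]) (simp add: G_def Suc.IH)
  have eq: "F h p K (Suc n) d z = g (z + - d 1)" for z
    unfolding F_Suc[OF h p K] g_def G_def
    by (intro INF_cong refl) (simp add: algebra_simps)
  show ?case unfolding eq
    using kconv_add_H[OF h p kconv_shift[OF kg, of "- d 1"]] by simp
qed


lemma JN_eq:
  assumes u1: "0 < u1"
  shows "JN h p K (Suc m) x0 d u1 = K + (Hcost h p (x0 - d 1 + u1) + F h p K m (\<lambda>j. d (Suc j)) (x0 - d 1 + u1))"
proof -
  define y where "y = x0 - d 1 + u1"
  define A where "A = {u::nat\<Rightarrow>real. \<forall>i. 0 \<le> u i}"
  define g where "g = cost h p K m (\<lambda>j. d (Suc j)) y"
  have s: "(\<Sum>i=2..Suc m. Hcost h p (traj x0 d (u(1:=u1)) i) + K*delta (u i)) = g (\<lambda>j. u (Suc j))" for u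
  proof -
    have e2: "{2..Suc m} = {Suc 1..Suc m}" by simp
    have "(\<Sum>i=2..Suc m. Hcost h p (traj x0 d (u(1:=u1)) i) + K*delta (u i))
       = (\<Sum>i=1..m. Hcost h p (traj x0 d (u(1:=u1)) (Suc i)) + K*delta (u (Suc i)))"
      unfolding e2 by (rule sum.shift_bounds_cl_Suc_ivl)
    also have "\<dots> = cost h p K m (\<lambda>j. d (Suc j)) y (\<lambda>j. (u(1:=u1)) (Suc j))"
      unfolding cost_def traj_shift y_def by (intro sum.cong refl) auto
    also have "\<dots> = g (\<lambda>j. u (Suc j))" unfolding g_def by (rule cost_cong) auto
    finally show ?thesis .
  qed
  have img: "(\<lambda>u. \<lambda>j. u (Suc j)) ` A = A"
  proof
    show "(\<lambda>u. \<lambda>j. u (Suc j)) ` A \<subseteq> A" by (auto simp: A_def)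
    show "A \<subseteq> (\<lambda>u. \<lambda>j. u (Suc j)) ` A"
    proof
      fix v assume v: "v \<in> A"
      define u where "u = (\<lambda>i::nat. if i = 0 then 0 else v (i - 1))"
      have "u \<in> A" using v by (auto simp: A_def u_def)
      moreover have "v = (\<lambda>j. u (Suc j))" by (simp add: u_def)
      ultimately show "v \<in> (\<lambda>u. \<lambda>j. u (Suc j)) ` A" by blast
    qed
  qed
  have "(INF u\<in>A. g (\<lambda>j. u (Suc j))) = (INF u\<in>(\<lambda>u. \<lambda>j. u (Suc j)) ` A. g u)"
    by (simp add: image_image)
  also have "\<dots> = F h p K m (\<lambda>j. d (Suc j)) y" unfolding img unfolding F_def g_def A_def ..
  finally have inf: "(INF u\<in>A. g (\<lambda>j. u (Suc j))) = F h p K m (\<lambda>j. d (Suc j)) y" .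
  have t1: "traj x0 d ((\<lambda>_. 0)(1 := u1)) 1 = y" by (simp add: y_def)
  have "JN h p K (Suc m) x0 d u1 = Hcost h p y + K + (INF u\<in>A. g (\<lambda>j. u (Suc j)))"
    unfolding JN_def t1 A_def[symmetric] s using u1 by (simp add: delta_def)
  then show ?thesis unfolding inf y_def by simp
qed

theorem lemma1:
  fixes h p K x0 :: real and N :: nat and d :: "nat \<Rightarrow> real"
  assumes "h > 0" and "p > 0" and "K > 0" and "N \<ge> 1"
    and "\<And>i. i \<in> {1..N} \<Longrightarrow> d i \<ge> 0"
    and "0 < u1" and "u1 < u1'" and "u1' < u1''"
  shows "K + JN h p K N x0 d u1'' \<ge>
           JN h p K N x0 d u1' + (u1'' - u1') / (u1' - u1) * (JN h p K N x0 d u1' - JN h p K N x0 d u1)"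
proof -
  obtain m where N: "N = Suc m" using assms(4) by (cases N) auto
  define Phi where "Phi = (\<lambda>z. Hcost h p z + F h p K m (\<lambda>j. d (Suc j)) z)"
  have kc: "kconv K (\<lambda>y. Phi (y + (x0 - d 1)))"
    unfolding Phi_def by (rule kconv_shift, rule main_kconv) (use assms in auto)
  have J: "JN h p K N x0 d v = K + Phi (v + (x0 - d 1))" if "0 < v" for v
    unfolding N JN_eq[OF that] Phi_def by (simp add: algebra_simps)
  define a where "a = u1" define b where "b = u1'" define c where "c = u1''"
  have ab: "a < b" and bc: "b < c" using assms by (auto simp: a_def b_def c_def)
  define Ja where "Ja = JN h p K N x0 d a"
  define Jb where "Jb = JN h p K N x0 d b"
  define Jc where "Jc = JN h p K N x0 d c"
  define l where "l = (c-b)/(c-a)"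
  define Pa where "Pa = Phi (a + (x0 - d 1))"
  define Pb where "Pb = Phi (b + (x0 - d 1))"
  define Pc where "Pc = Phi (c + (x0 - d 1))"
  have kk: "Pb \<le> l * Pa + (1 - l) * (K + Pc)"
    using kc ab bc unfolding kconv_def Pa_def Pb_def Pc_def l_def by blast
  have JJ: "Ja = K + Pa" "Jb = K + Pb" "Jc = K + Pc"
    using J assms ab bc by (auto simp: Ja_def Jb_def Jc_def a_def Pa_def Pb_def Pc_def)
  have ex: "l * (K + Pa) + (1 - l) * (K + (K + Pc)) = K + (l * Pa + (1 - l) * (K + Pc))"
    by (simp add: algebra_simps)
  have key: "Jb \<le> (c-b)/(c-a) * Ja + (1 - (c-b)/(c-a)) * (K + Jc)"
    unfolding l_def[symmetric] JJ ex using kk by simp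
  have ca: "0 < c - a" using ab bc by simp
  have ba: "0 < b - a" using ab by simp
  have "(c-a) * Jb \<le> (c-a) * ((c-b)/(c-a) * Ja + (1 - (c-b)/(c-a)) * (K + Jc))"
    using key ca by (simp add: mult_left_mono)
  also have "\<dots> = ((c-a)*l) * Ja + ((c-a)*(1-l)) * (K + Jc)"
    unfolding l_def[symmetric] by (simp add: algebra_simps)
  also have cl: "(c-a)*l = c-b" unfolding l_def using ca by simp
  also have "(c-a)*(1-l) = b-a" using cl by (simp add: right_diff_distrib)
  finally have k2: "(c-a) * Jb \<le> (c-b) * Ja + (b-a) * (K + Jc)" .
  have "(c-b)/(b-a) * (Jb - Ja) \<le> K + Jc - Jb"
  proof -
    have "(c-b) * (Jb - Ja) \<le> (b-a) * (K + Jc - Jb)" using k2 by (simp add: algebra_simps)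
    then show ?thesis using ba by (simp add: divide_simps mult.commute)
  qed
  then show ?thesis by (simp add: Ja_def Jb_def Jc_def a_def b_def c_def)
qed

end
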